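(* Let $x,y\in\mathbb{R}$ and let $\mathcal{A}$ be the Apollonian disk packing generated by a tricycle whose three disks have signed curvatures $1-y$, $x^2+y^2-y$ and $y$. Suppose $\mathcal{A}$ is integral up to scaling, i.e. there is a real $\lambda>0$ such that $\lambda\kappa\in\mathbb{Z}$ for the curvature $\kappa$ of every disk of $\mathcal{A}$. Then $x\in\mathbb{Q}$ and $y\in\mathbb{Q}$.
   Context: A tricycle is a triple of mutually tangent (generalized) disks (circles or lines, with signed curvatures, a line having curvature $0$ and an enclosing disk having negative curvature). A Descartes configuration is a quadruple of mutually tangent disks, with curvatures satisfying $(a+b+c+d)^2=2(a^2+b^2+c^2+d^2)$. The Apollonian disk packing generated by a tricycle is obtained by recursively completing every tricycle already constructed to a Descartes configuration. The triple $(1-y,\,x^2+y^2-y,\,y)$ is the curvature triple of the tricycle described by the tangency Pauli spinor $(1,\,x+iy)$, i.e. by the two tangency spinors $(1,0)$ and $(x,y)$ issuing from the disk of curvature $y$. *)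

theory Defs
  imports Complex_Main
begin

text \<open>A tricycle is recorded by the
triple of signed curvatures of its three mutually tangent disks.  By Descartes'
theorem, the two disks completing a tricycle with curvatures (a,b,c) to a Descartes
configuration have curvatures a + b + c +/- 2 sqrt(ab + bc + ca).\<close>

inductive_set apollonian_tricycles :: "real \<times> real \<times> real \<Rightarrow> (real \<times> real \<times> real) set"
  for t :: "real \<times> real \<times> real" where
  base: "t \<in> apollonian_tricycles t"
| step1: "\<lbrakk>(a, b, c) \<in> apollonian_tricycles t; s \<in> {-1, 1};
           d = a + b + c + s * 2 * sqrt (a * b + b * c + c * a)\<rbrakk>
          \<Longrightarrow> (a, b, d) \<in> apollonian_tricycles t"
| step2: "\<lbrakk>(a, b, c) \<in> apollonian_tricycles t; s \<in> {-1, 1};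
           d = a + b + c + s * 2 * sqrt (a * b + b * c + c * a)\<rbrakk>
          \<Longrightarrow> (a, c, d) \<in> apollonian_tricycles t"
| step3: "\<lbrakk>(a, b, c) \<in> apollonian_tricycles t; s \<in> {-1, 1};
           d = a + b + c + s * 2 * sqrt (a * b + b * c + c * a)\<rbrakk>
          \<Longrightarrow> (b, c, d) \<in> apollonian_tricycles t"

definition apollonian_curvatures :: "real \<times> real \<times> real \<Rightarrow> real set" where
  "apollonian_curvatures t =
     {k. \<exists>a b c. (a, b, c) \<in> apollonian_tricycles t \<and> (k = a \<or> k = b \<or> k = c)}"

definition integral_up_to_scaling :: "real set \<Rightarrow> bool" where
  "integral_up_to_scaling K \<longleftrightarrow> (\<exists>l::real. l > 0 \<and> (\<forall>k\<in>K. l * k \<in> \<int>))"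

end

theory Submission
  imports Defs
begin

theorem proposition7:
  fixes x y :: real
  assumes "integral_up_to_scaling (apollonian_curvatures (1 - y, x^2 + y^2 - y, y))"
  shows "x \<in> \<rat> \<and> y \<in> \<rat>"
proof -
  define t where "t = (1 - y, x^2 + y^2 - y, y)"
  obtain l where l: "l > 0" "\<And>k. k \<in> apollonian_curvatures t \<Longrightarrow> l * k \<in> \<int>"
    using assms unfolding integral_up_to_scaling_def t_def by blast
  have bt: "(1 - y, x^2 + y^2 - y, y) \<in> apollonian_tricycles t"
    unfolding t_def by (rule apollonian_tricycles.base)
  have q: "(1 - y) * (x^2 + y^2 - y) + (x^2 + y^2 - y) * y + y * (1 - y) = x^2"
    by (simp add: algebra_simps power2_eq_square)
  have sq: "sqrt (x^2) = \<bar>x\<bar>" by simp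
  define dp where "dp = (1 - y) + (x^2 + y^2 - y) + y + 1 * 2 * \<bar>x\<bar>"
  define dm where "dm = (1 - y) + (x^2 + y^2 - y) + y + (-1) * 2 * \<bar>x\<bar>"
  have "(1 - y, x^2 + y^2 - y, dp) \<in> apollonian_tricycles t"
    by (rule apollonian_tricycles.step1[OF bt, of 1]) (auto simp: dp_def q)
  hence dpi: "l * dp \<in> \<int>" using l(2) unfolding apollonian_curvatures_def by blast
  have "(1 - y, x^2 + y^2 - y, dm) \<in> apollonian_tricycles t"
    by (rule apollonian_tricycles.step1[OF bt, of "-1"]) (auto simp: dm_def q)
  hence dmi: "l * dm \<in> \<int>" using l(2) unfolding apollonian_curvatures_def by blast
  have ai: "l * (1 - y) \<in> \<int>" using l(2) bt unfolding apollonian_curvatures_def by blast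
  have ci: "l * y \<in> \<int>" using l(2) bt unfolding apollonian_curvatures_def by blast
  have "l * (1 - y) + l * y \<in> \<int>" using ai ci by (rule Ints_add)
  hence li: "l \<in> \<int>" by (simp add: algebra_simps)
  have lq: "l \<in> \<rat>" using li Ints_subset_Rats by blast
  have yq: "y = (l * y) / l" using l(1) by simp
  have "l * y \<in> \<rat>" using ci Ints_subset_Rats by blast
  hence Y: "y \<in> \<rat>" using yq lq by (metis Rats_divide)
  have "l * dp - l * dm \<in> \<int>" using dpi dmi by (rule Ints_diff)
  moreover have "l * dp - l * dm = 4 * l * \<bar>x\<bar>" by (simp add: dp_def dm_def algebra_simps)
  ultimately have "4 * l * \<bar>x\<bar> \<in> \<rat>" using Ints_subset_Rats by auto
  moreover have "\<bar>x\<bar> = (4 * l * \<bar>x\<bar>) / (4 * l)" using l(1) by simp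
  ultimately have "\<bar>x\<bar> \<in> \<rat>" using lq by (metis Rats_divide Rats_mult Rats_number_of)
  hence "x \<in> \<rat>" by (cases "x \<ge> 0") (auto simp: Rats_minus_iff abs_if split: if_splits)
  thus ?thesis using Y by blast
qed

end
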